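(* For a finite word $\alpha=(a_0,\ldots,a_{L-1})$ of positive integers let $K(\alpha)=\sum_i a_i$, $C(\alpha)=\sum_{j=0}^{L-1}3^{L-1-j}2^{a_0+\cdots+a_{j-1}}$ and $D(\alpha)=2^{K(\alpha)}-3^{L}$, with the convention $C(\emptyset)=0$, $D(\emptyset)=2^0-3^0=0$ for the empty word. Let $\tau$ be a word of length $p\ge 1$, let $q\ge 1$, let $\eta$ be a (possibly empty) word of length $t\ge 0$, and let $\sigma=\tau^q\eta$ (concatenation of $q$ copies of $\tau$ followed by $\eta$), of length $\ell=qp+t$. Writing $K_p=K(\tau)$, $C_p=C(\tau)$, $D_p=D(\tau)$, $C_\ell=C(\sigma)$, $D=D(\sigma)$, $C_\eta=C(\eta)$, $D_\eta=D(\eta)$, one has $$C_\ell D_p-C_p D=2^{qK_p}\bigl(C_\eta D_p-C_p D_\eta\bigr).$$ *)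

theory Defs
  imports Main
begin

definition K :: "nat list \<Rightarrow> nat" where
  "K \<alpha> = sum_list \<alpha>"

definition C :: "nat list \<Rightarrow> int" where
  "C \<alpha> = (\<Sum>j<length \<alpha>. 3 ^ (length \<alpha> - 1 - j) * 2 ^ (sum_list (take j \<alpha>)))"

definition D :: "nat list \<Rightarrow> int" where
  "D \<alpha> = 2 ^ K \<alpha> - 3 ^ length \<alpha>"

end

theory Submission
  imports Defs
begin

lemma C_append: "C (a @ b) = 3 ^ length b * C a + 2 ^ K a * C b"
proof -
  let ?m = "length a" and ?n = "length b"
  have s: "{..<?m + ?n} = {..<?m} \<union> {?m..<?m + ?n}" by auto
  have "C (a @ b) = (\<Sum>j<?m. 3 ^ (?m + ?n - 1 - j) * 2 ^ sum_list (take j (a @ b)))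
      + (\<Sum>j\<in>{?m..<?m + ?n}. 3 ^ (?m + ?n - 1 - j) * 2 ^ sum_list (take j (a @ b)))"
    unfolding C_def length_append s by (rule sum.union_disjoint) auto
  also have "(\<Sum>j<?m. 3 ^ (?m + ?n - 1 - j) * 2 ^ sum_list (take j (a @ b)))
      = (\<Sum>j<?m. 3 ^ ?n * (3 ^ (?m - 1 - j) * 2 ^ sum_list (take j a)) :: int)"
  proof (rule sum.cong)
    fix j assume "j \<in> {..<?m}"
    then have "?m + ?n - 1 - j = ?n + (?m - 1 - j)" by auto
    then show "3 ^ (?m + ?n - 1 - j) * 2 ^ sum_list (take j (a @ b))
      = (3 ^ ?n * (3 ^ (?m - 1 - j) * 2 ^ sum_list (take j a)) :: int)"
      using \<open>j \<in> _\<close> by (simp only: power_add) simp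
  qed simp
  also have "(\<Sum>j\<in>{?m..<?m + ?n}. 3 ^ (?m + ?n - 1 - j) * 2 ^ sum_list (take j (a @ b)))
      = (\<Sum>i<?n. 3 ^ (?m + ?n - 1 - (i + ?m)) * 2 ^ sum_list (take (i + ?m) (a @ b)) :: int)"
    by (rule sum.reindex_bij_witness[where j="\<lambda>j. j - ?m" and i="\<lambda>i. i + ?m"]) auto
  also have "\<dots> = (\<Sum>i<?n. 2 ^ K a * (3 ^ (?n - 1 - i) * 2 ^ sum_list (take i b)) :: int)"
    by (rule sum.cong) (auto simp: K_def power_add)
  finally show ?thesis unfolding C_def by (simp add: sum_distrib_left)
qed

lemma K_append: "K (a @ b) = K a + K b" by (simp add: K_def)

lemma step: "C (t @ r) * D t - C t * D (t @ r) = 2 ^ K t * (C r * D t - C t * D r)"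
  unfolding C_append D_def K_append by (simp add: power_add algebra_simps)

lemma gen: "C (concat (replicate q t) @ r) * D t - C t * D (concat (replicate q t) @ r)
         = 2 ^ (q * K t) * (C r * D t - C t * D r)"
proof (induction q)
  case 0 then show ?case by simp
next
  case (Suc q)
  have "C (concat (replicate (Suc q) t) @ r) * D t - C t * D (concat (replicate (Suc q) t) @ r)
    = 2 ^ K t * (C (concat (replicate q t) @ r) * D t - C t * D (concat (replicate q t) @ r))"
    using step[of t "concat (replicate q t) @ r"] by simp
  also have "\<dots> = 2 ^ (Suc q * K t) * (C r * D t - C t * D r)"
    using Suc by (simp add: power_add)
  finally show ?case .
qed

theorem mainTheorem20:
  fixes \<tau> \<eta> :: "nat list" and q :: nat
  assumes "length \<tau> \<ge> 1" and "q \<ge> 1"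
    and "\<forall>a\<in>set \<tau>. a > 0" and "\<forall>a\<in>set \<eta>. a > 0"
  shows "C (concat (replicate q \<tau>) @ \<eta>) * D \<tau> - C \<tau> * D (concat (replicate q \<tau>) @ \<eta>)
         = 2 ^ (q * K \<tau>) * (C \<eta> * D \<tau> - C \<tau> * D \<eta>)"
  by (rule gen)

end
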